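(* Let $\mathcal{X}\subset\mathbb{R}^d$ be a compact metric space, $\mathcal{Y}\subset\mathbb{R}$, and let $(X,Y)$ be distributed according to a probability measure $\rho$ on $\mathcal{X}\times\mathcal{Y}$ with marginal $\rho_{\mathcal{X}}$. Let $f^\star(x)=\mathbb{E}(Y\mid X=x)$ be bounded, let $\mathcal{H}\subset C(\mathcal{X})$ be uniformly bounded, and set $M=\max\{\|f^\star\|_\infty,\sup_{f\in\mathcal{H}}\|f\|_\infty\}$. Assume there is $\epsilon>0$ with $\mathbb{E}|Y|^{1+\epsilon}<+\infty$, and let $\sigma>\max\{2M,1\}$. Then there exist positive constants $c_1,c_2$, independent of $\sigma$ and of $f$, such that for every measurable $f:\mathcal{X}\to\mathbb{R}$ with $\|f\|_\infty\le M$, the random variable $\xi(x,y)=\ell_\sigma(y-f(x))-\ell_\sigma(y-f^\star(x))$ satisfies \[ \mathbb{E}\xi^2\le c_1\|f-f^\star\|_{2,\rho}^{\frac{2(\epsilon-1)_+}{\epsilon+1}}+c_2\sigma^{1-\epsilon}. \]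
   Context: The Huber loss with scale parameter $\sigma>0$ is $\ell_\sigma(t)=t^2$ if $|t|\le\sigma$ and $\ell_\sigma(t)=2\sigma|t|-\sigma^2$ otherwise. $\|g\|_{2,\rho}$ is the $L^2(\rho_{\mathcal{X}})$ norm. For $t\in\mathbb{R}$, $t_+=\max(0,t)$. The expectation is over $(X,Y)\sim\rho$. *)

theory Defs
  imports "HOL-Probability.Probability"
begin

definition huber :: "real \<Rightarrow> real \<Rightarrow> real" where
  "huber \<sigma> t = (if \<bar>t\<bar> \<le> \<sigma> then t\<^sup>2 else 2 * \<sigma> * \<bar>t\<bar> - \<sigma>\<^sup>2)"

definition L2_norm_marg :: "('a \<times> real) measure \<Rightarrow> ('a \<Rightarrow> real) \<Rightarrow> real" where
  "L2_norm_marg \<rho> g = sqrt (\<integral> z. (g (fst z))\<^sup>2 \<partial>\<rho>)"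

definition pos_part :: "real \<Rightarrow> real" where
  "pos_part t = max 0 t"

end

theory Submission imports Defs begin
lemma huber_alt: "huber s t = (min (abs t) s)\<^sup>2 + 2 * s * (abs t - min (abs t) s)"
  unfolding huber_def by (auto simp: power2_eq_square min_def algebra_simps abs_if)

lemma huber_lip:
  fixes s a b W :: real
  assumes s: "s > 0" and a: "\<bar>a\<bar> \<le> W" and b: "\<bar>b\<bar> \<le> W"
  shows "\<bar>huber s a - huber s b\<bar> \<le> 2 * min s W * \<bar>a - b\<bar>"
proof -
  have sq: "\<bar>a\<^sup>2 - b\<^sup>2\<bar> = \<bar>a - b\<bar> * \<bar>a + b\<bar>"
    by (simp add: power2_eq_square abs_mult[symmetric] algebra_simps)
  have ab: "\<bar>\<bar>a\<bar> - \<bar>b\<bar>\<bar> \<le> \<bar>a - b\<bar>" by simp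
  have a2: "a\<^sup>2 = \<bar>a\<bar>\<^sup>2" "b\<^sup>2 = \<bar>b\<bar>\<^sup>2" by simp_all
  show ?thesis
  proof (cases "\<bar>a\<bar> \<le> s")
    case ca: True
    show ?thesis
    proof (cases "\<bar>b\<bar> \<le> s")
      case True
      have "\<bar>a + b\<bar> \<le> 2 * min s W" using abs_triangle_ineq[of a b] ca True a b by (auto simp: min_def)
      then have "\<bar>a - b\<bar> * \<bar>a + b\<bar> \<le> \<bar>a - b\<bar> * (2 * min s W)" by (intro mult_left_mono) auto
      then show ?thesis using ca True sq unfolding huber_def by (simp add: algebra_simps)
    next
      case False
      have mW: "min s W = s" using False b by simp
      have h3: "2 * s * \<bar>a\<bar> \<le> s\<^sup>2 + a\<^sup>2" using sum_squares_bound[of s "\<bar>a\<bar>"] by simp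
      have h1: "a\<^sup>2 \<le> s\<^sup>2" using ca by (metis a2(1) abs_ge_zero power_mono)
      have h2: "s * s \<le> s * \<bar>b\<bar>" using False s by (intro mult_left_mono) auto
      have "0 \<le> 2 * s * \<bar>b\<bar> - s\<^sup>2 - a\<^sup>2" using h1 h2 by (simp add: power2_eq_square)
      then have "\<bar>2 * s * \<bar>b\<bar> - s\<^sup>2 - a\<^sup>2\<bar> \<le> 2 * s * (\<bar>b\<bar> - \<bar>a\<bar>)"
        using h3 by (subst abs_of_nonneg) (simp_all add: right_diff_distrib)
      also have "\<dots> \<le> 2 * s * \<bar>a - b\<bar>" using ab s by (intro mult_left_mono) auto
      finally show ?thesis using ca False mW unfolding huber_def by (simp add: abs_minus_commute)
    qed
  next
    case ca: False
    show ?thesis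
    proof (cases "\<bar>b\<bar> \<le> s")
      case True
      have mW: "min s W = s" using ca a by simp
      have h3: "2 * s * \<bar>b\<bar> \<le> s\<^sup>2 + b\<^sup>2" using sum_squares_bound[of s "\<bar>b\<bar>"] by simp
      have h1: "b\<^sup>2 \<le> s\<^sup>2" using True by (metis a2(2) abs_ge_zero power_mono)
      have h2: "s * s \<le> s * \<bar>a\<bar>" using ca s by (intro mult_left_mono) auto
      have "0 \<le> 2 * s * \<bar>a\<bar> - s\<^sup>2 - b\<^sup>2" using h1 h2 by (simp add: power2_eq_square)
      then have "\<bar>2 * s * \<bar>a\<bar> - s\<^sup>2 - b\<^sup>2\<bar> \<le> 2 * s * (\<bar>a\<bar> - \<bar>b\<bar>)"
        using h3 by (subst abs_of_nonneg) (simp_all add: right_diff_distrib)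
      also have "\<dots> \<le> 2 * s * \<bar>a - b\<bar>" using ab s by (intro mult_left_mono) auto
      finally show ?thesis using ca True mW unfolding huber_def by simp
    next
      case False
      have mW: "min s W = s" using ca a by simp
      have e: "huber s a - huber s b = (2 * s) * (\<bar>a\<bar> - \<bar>b\<bar>)"
        using ca False unfolding huber_def by (simp add: right_diff_distrib)
      have "\<bar>huber s a - huber s b\<bar> = (2 * s) * \<bar>\<bar>a\<bar> - \<bar>b\<bar>\<bar>"
        unfolding e abs_mult using s by simp
      also have "\<dots> \<le> 2 * s * \<bar>a - b\<bar>" using ab s by (intro mult_left_mono) auto
      finally show ?thesis using mW by simp
    qed
  qed
qed

lemma ptA:
  fixes e s v :: real
  assumes e: "0 < e" "e \<le> 1" and s: "s > 0" and v: "v \<ge> 0"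
  shows "(min s (2 * v))\<^sup>2 \<le> s powr (1 - e) * (4 * v powr (1 + e))"
proof (cases "v = 0")
  case True then show ?thesis using s by (auto simp: min_def)
next
  case False
  let ?m = "min s (2 * v)"
  have mpos: "?m > 0" using s v False by simp
  have "?m powr (1 + e) * ?m powr (1 - e) = ?m powr 2"
    by (simp add: powr_add[symmetric])
  then have "?m\<^sup>2 = ?m powr (1 + e) * ?m powr (1 - e)"
    using mpos by simp
  also have "\<dots> \<le> ((2 * v) powr (1+e)) * s powr (1 - e)"
    using mpos e by (intro mult_mono powr_mono2) auto
  also have "(2 * v) powr (1+e) = 2 powr (1+e) * v powr (1+e)" using v by (simp add: powr_mult)
  also have "2 powr (1+e) \<le> (2::real) powr 2" using e by (intro powr_mono) auto
  then have "2 powr (1+e) \<le> 4" by simp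
  then have "2 powr (1+e) * v powr (1+e) \<le> 4 * v powr (1+e)" by (intro mult_right_mono) auto
  finally show ?thesis using s by (smt (verit) mult.commute mult_left_mono powr_ge_zero)
qed

lemma ptB:
  fixes e T v g M :: real
  assumes e: "e > 1" and T: "T > 0" and v: "v \<ge> 0" and g: "g\<^sup>2 \<le> 4 * M\<^sup>2"
  shows "v\<^sup>2 * g\<^sup>2 \<le> T\<^sup>2 * g\<^sup>2 + 4 * M\<^sup>2 * T powr (1 - e) * v powr (1 + e)"
proof (cases "v \<le> T")
  case True
  have "v\<^sup>2 * g\<^sup>2 \<le> T\<^sup>2 * g\<^sup>2" using True v by (intro mult_right_mono) (simp_all add: power_mono)
  moreover have "0 \<le> 4 * M\<^sup>2 * T powr (1 - e) * v powr (1 + e)" by simp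
  ultimately show ?thesis by linarith
next
  case False
  then have vp: "v > 0" using T by simp
  have "v powr (1 + e) * v powr (1 - e) = v powr 2"
    by (simp add: powr_add[symmetric])
  then have "v\<^sup>2 = v powr (1 + e) * v powr (1 - e)"
    using vp by simp
  also have "v powr (1 - e) \<le> T powr (1 - e)"
    using False T e by (intro powr_mono2') auto
  then have "v powr (1 + e) * v powr (1 - e) \<le> v powr (1 + e) * T powr (1 - e)"
    by (intro mult_left_mono) auto
  finally have "v\<^sup>2 * g\<^sup>2 \<le> (v powr (1 + e) * T powr (1 - e)) * (4 * M\<^sup>2)"
    using g by (intro mult_mono) auto
  then have "v\<^sup>2 * g\<^sup>2 \<le> 4*M\<^sup>2 * T powr (1 - e) * v powr (1 + e)" by (simp add: ac_simps)
  moreover have "0 \<le> T\<^sup>2 * g\<^sup>2" by simp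
  ultimately show ?thesis by linarith
qed
lemma AE_le_norm:
  fixes f h :: "'a \<Rightarrow> real"
  assumes "AE z in M. f z \<le> h z" "\<And>z. 0 \<le> f z"
  shows "AE z in M. norm (f z) \<le> norm (h z)"
  using assms(1) by (rule eventually_mono) (use assms(2) in \<open>smt (verit) real_norm_def abs_ge_self abs_of_nonneg\<close>)

theorem theorem2:
  fixes \<rho> :: "((real^('d::finite)) \<times> real) measure"
    and X :: "(real^'d) set"
    and fstar :: "real^'d \<Rightarrow> real"
    and H :: "(real^'d \<Rightarrow> real) set"
    and \<epsilon> :: real
  assumes prob: "prob_space \<rho>"
    and sets_rho: "sets \<rho> = sets borel"
    and X_compact: "compact X"
    and supp: "AE z in \<rho>. fst z \<in> X"
    and fstar_meas: "fstar \<in> borel_measurable borel"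
    and fstar_cond: "AE z in \<rho>. fstar (fst z) =
           real_cond_exp \<rho> (vimage_algebra (space \<rho>) fst borel) snd z"
    and fstar_bdd: "\<exists>B. \<forall>x\<in>X. \<bar>fstar x\<bar> \<le> B"
    and H_cont: "\<forall>h\<in>H. continuous_on X h"
    and H_bdd: "\<exists>B. \<forall>h\<in>H. \<forall>x\<in>X. \<bar>h x\<bar> \<le> B"
    and eps_pos: "\<epsilon> > 0"
    and moment: "integrable \<rho> (\<lambda>z. \<bar>snd z\<bar> powr (1 + \<epsilon>))"
  defines "M \<equiv> Sup ({\<bar>fstar x\<bar> | x. x \<in> X} \<union> {\<bar>h x\<bar> | h x. h \<in> H \<and> x \<in> X})"
  shows "\<exists>c1 c2. c1 > 0 \<and> c2 > 0 \<and>
    (\<forall>\<sigma> f. \<sigma> > max (2 * M) 1 \<longrightarrow> f \<in> borel_measurable borel \<longrightarrow> (\<forall>x\<in>X. \<bar>f x\<bar> \<le> M) \<longrightarrow>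
      (\<integral> z. (huber \<sigma> (snd z - f (fst z)) - huber \<sigma> (snd z - fstar (fst z)))\<^sup>2 \<partial>\<rho>)
        \<le> c1 * (L2_norm_marg \<rho> (\<lambda>x. f x - fstar x)) powr (2 * pos_part (\<epsilon> - 1) / (\<epsilon> + 1))
           + c2 * \<sigma> powr (1 - \<epsilon>))"
proof -
  interpret prob_space \<rho> by (rule prob)
  let ?S = "{\<bar>fstar x\<bar> | x. x \<in> X} \<union> {\<bar>h x\<bar> | h x. h \<in> H \<and> x \<in> X}"
  have Xne: "X \<noteq> {}"
  proof
    assume "X = {}"
    then have "AE z in \<rho>. False" using supp by simp
    then show False using AE_False by simp
  qed
  obtain B1 where B1: "\<forall>x\<in>X. \<bar>fstar x\<bar> \<le> B1" using fstar_bdd by blast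
  obtain B2 where B2: "\<forall>h\<in>H. \<forall>x\<in>X. \<bar>h x\<bar> \<le> B2" using H_bdd by blast
  have bdd: "bdd_above ?S"
    using B1 B2 by (intro bdd_aboveI[of _ "max B1 B2"]) fastforce
  have fsM: "\<bar>fstar x\<bar> \<le> M" if "x \<in> X" for x
    unfolding M_def using that by (intro cSup_upper[OF _ bdd]) blast
  have M0: "0 \<le> M" using Xne fsM by fastforce
  have mfst[measurable]: "fst \<in> \<rho> \<rightarrow>\<^sub>M borel"
    unfolding measurable_cong_sets[OF sets_rho refl] by (subst borel_prod[symmetric]) simp
  have msnd[measurable]: "snd \<in> \<rho> \<rightarrow>\<^sub>M borel"
    unfolding measurable_cong_sets[OF sets_rho refl] by (subst borel_prod[symmetric]) simp
  have [measurable]: "fstar \<in> borel_measurable borel" by (rule fstar_meas)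
  define D where "D z = \<bar>snd z\<bar> powr (1 + \<epsilon>) + M powr (1 + \<epsilon>)" for z :: "(real^'d) \<times> real"
  have D0: "0 \<le> D z" for z unfolding D_def by simp
  have intD: "integrable \<rho> D" unfolding D_def by (rule Bochner_Integration.integrable_add[OF moment]) simp
  define ED where "ED = integral\<^sup>L \<rho> D"
  have ED0: "0 \<le> ED" unfolding ED_def D_def by (intro Bochner_Integration.integral_nonneg) auto
  define c1 where "c1 = 16 * (1 + 4 * M\<^sup>2 * ED)"
  define c2 where "c2 = 64 * M\<^sup>2 * ED + 1"
  have c1: "c1 > 0" unfolding c1_def using ED0 by (simp add: add_pos_nonneg)
  have c2: "c2 > 0" unfolding c2_def using ED0 by (simp add: add_nonneg_pos)
  show ?thesis
  proof (rule exI[of _ c1], rule exI[of _ c2], intro conjI c1 c2 allI impI)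
    fix \<sigma> :: real and f :: "real^'d \<Rightarrow> real"
    assume sig: "\<sigma> > max (2 * M) 1" and fm[measurable]: "f \<in> borel_measurable borel"
      and fM: "\<forall>x\<in>X. \<bar>f x\<bar> \<le> M"
    have s0: "\<sigma> > 0" using sig by simp
    define \<xi> where "\<xi> z = huber \<sigma> (snd z - f (fst z)) - huber \<sigma> (snd z - fstar (fst z))" for z :: "(real^'d) \<times> real"
    define g where "g z = f (fst z) - fstar (fst z)" for z :: "(real^'d) \<times> real"
    define v where "v z = max \<bar>snd z\<bar> M" for z :: "(real^'d) \<times> real"
    have m\<xi>[measurable]: "(\<lambda>z. (\<xi> z)\<^sup>2) \<in> borel_measurable \<rho>"
      unfolding \<xi>_def huber_alt by measurable
    have mg[measurable]: "(\<lambda>z. (g z)\<^sup>2) \<in> borel_measurable \<rho>"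
      unfolding g_def by measurable
    have v0: "0 \<le> v z" for z unfolding v_def using M0 by simp
    have vD: "v z powr (1 + \<epsilon>) \<le> D z" for z
      unfolding v_def D_def by (cases "\<bar>snd z\<bar> \<le> M") (auto simp: max_def)
    have pt: "AE z in \<rho>. (\<xi> z)\<^sup>2 \<le> 4 * (min \<sigma> (2 * v z))\<^sup>2 * (g z)\<^sup>2 \<and> (g z)\<^sup>2 \<le> 4 * M\<^sup>2"
      using supp
    proof (rule AE_mp, intro AE_I2 impI)
      fix z :: "(real^'d) \<times> real" assume zX: "fst z \<in> X"
      have a: "\<bar>snd z - f (fst z)\<bar> \<le> 2 * v z" using fM zX unfolding v_def by fastforce
      have b: "\<bar>snd z - fstar (fst z)\<bar> \<le> 2 * v z" using fsM[OF zX] unfolding v_def by fastforce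
      have l: "\<bar>\<xi> z\<bar> \<le> 2 * min \<sigma> (2 * v z) * \<bar>g z\<bar>"
        unfolding \<xi>_def g_def using huber_lip[OF s0 a b] by (simp add: abs_minus_commute)
      have "(\<xi> z)\<^sup>2 \<le> (2 * min \<sigma> (2 * v z) * \<bar>g z\<bar>)\<^sup>2"
        using l by (metis abs_ge_zero power2_abs power_mono)
      also have "\<dots> = 4 * (min \<sigma> (2 * v z))\<^sup>2 * (g z)\<^sup>2" by (simp add: power_mult_distrib)
      finally have 1: "(\<xi> z)\<^sup>2 \<le> 4 * (min \<sigma> (2 * v z))\<^sup>2 * (g z)\<^sup>2" .
      have "\<bar>g z\<bar> \<le> 2 * M" unfolding g_def using fM zX fsM[OF zX] by fastforce
      then have "(g z)\<^sup>2 \<le> (2 * M)\<^sup>2" by (metis abs_ge_zero power2_abs power_mono)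
      then have 2: "(g z)\<^sup>2 \<le> 4 * M\<^sup>2" by (simp add: power_mult_distrib)
      show "(\<xi> z)\<^sup>2 \<le> 4 * (min \<sigma> (2 * v z))\<^sup>2 * (g z)\<^sup>2 \<and> (g z)\<^sup>2 \<le> 4 * M\<^sup>2"
        using 1 2 by simp
    qed
    define N where "N = L2_norm_marg \<rho> (\<lambda>x. f x - fstar x)"
    have N0: "0 \<le> N" unfolding N_def L2_norm_marg_def by simp
    have rhs0: "0 \<le> c1 * N powr (2 * pos_part (\<epsilon> - 1) / (\<epsilon> + 1))"
      using c1 by simp
    have rhs1: "0 \<le> c2 * \<sigma> powr (1 - \<epsilon>)" using c2 by simp
    have xi_eq: "(\<lambda>z. (huber \<sigma> (snd z - f (fst z)) - huber \<sigma> (snd z - fstar (fst z)))\<^sup>2) = (\<lambda>z. (\<xi> z)\<^sup>2)"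
      by (simp add: \<xi>_def)
    show "(\<integral> z. (huber \<sigma> (snd z - f (fst z)) - huber \<sigma> (snd z - fstar (fst z)))\<^sup>2 \<partial>\<rho>)
        \<le> c1 * (L2_norm_marg \<rho> (\<lambda>x. f x - fstar x)) powr (2 * pos_part (\<epsilon> - 1) / (\<epsilon> + 1)) + c2 * \<sigma> powr (1 - \<epsilon>)"
    proof (cases "\<epsilon> \<le> 1")
      case True
      have bnd: "AE z in \<rho>. (\<xi> z)\<^sup>2 \<le> 64 * M\<^sup>2 * \<sigma> powr (1 - \<epsilon>) * D z"
        using pt
      proof (rule AE_mp, intro AE_I2 impI)
        fix z :: "(real^'d) \<times> real" assume h: "(\<xi> z)\<^sup>2 \<le> 4 * (min \<sigma> (2 * v z))\<^sup>2 * (g z)\<^sup>2 \<and> (g z)\<^sup>2 \<le> 4 * M\<^sup>2"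
        have p: "(min \<sigma> (2 * v z))\<^sup>2 \<le> \<sigma> powr (1 - \<epsilon>) * (4 * D z)"
          using ptA[OF eps_pos True s0 v0[of z]] vD[of z]
          by (smt (verit) mult_left_mono powr_ge_zero)
        have "(\<xi> z)\<^sup>2 \<le> 4 * (min \<sigma> (2 * v z))\<^sup>2 * (g z)\<^sup>2" using h by simp
        also have "\<dots> \<le> 4 * (\<sigma> powr (1 - \<epsilon>) * (4 * D z)) * (4 * M\<^sup>2)"
          using h p D0[of z] by (intro mult_mono) auto
        finally show "(\<xi> z)\<^sup>2 \<le> 64 * M\<^sup>2 * \<sigma> powr (1 - \<epsilon>) * D z" by (simp add: algebra_simps)
      qed
      have int2: "integrable \<rho> (\<lambda>z. 64 * M\<^sup>2 * \<sigma> powr (1 - \<epsilon>) * D z)"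
        using intD by simp
      have int1: "integrable \<rho> (\<lambda>z. (\<xi> z)\<^sup>2)"
        by (rule Bochner_Integration.integrable_bound[OF int2 m\<xi> AE_le_norm[OF bnd]]) simp
      have "(\<integral> z. (\<xi> z)\<^sup>2 \<partial>\<rho>) \<le> (\<integral> z. 64 * M\<^sup>2 * \<sigma> powr (1 - \<epsilon>) * D z \<partial>\<rho>)"
        by (rule integral_mono_AE[OF int1 int2 bnd])
      also have "\<dots> = 64 * M\<^sup>2 * ED * \<sigma> powr (1 - \<epsilon>)" unfolding ED_def by simp
      also have "\<dots> \<le> c2 * \<sigma> powr (1 - \<epsilon>)" unfolding c2_def
        by (intro mult_right_mono) auto
      finally show ?thesis unfolding N_def[symmetric] xi_eq using rhs0 by linarith
    next
      case False
      have pp: "pos_part (\<epsilon> - 1) = \<epsilon> - 1" using False by (simp add: pos_part_def)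
      have intg: "integrable \<rho> (\<lambda>z. (g z)\<^sup>2)"
        by (rule Bochner_Integration.integrable_bound[OF integrable_const[of "4 * M\<^sup>2"] mg])
           (rule AE_le_norm, use pt in \<open>rule eventually_mono\<close>, auto)
      have Ig: "(\<integral> z. (g z)\<^sup>2 \<partial>\<rho>) = N\<^sup>2"
        unfolding N_def L2_norm_marg_def g_def by (simp add: Bochner_Integration.integral_nonneg)
      have pt2: "AE z in \<rho>. (\<xi> z)\<^sup>2 \<le> 16 * (v z)\<^sup>2 * (g z)\<^sup>2 \<and> (g z)\<^sup>2 \<le> 4 * M\<^sup>2"
        using pt
      proof (rule AE_mp, intro AE_I2 impI)
        fix z :: "(real^'d) \<times> real" assume h: "(\<xi> z)\<^sup>2 \<le> 4 * (min \<sigma> (2 * v z))\<^sup>2 * (g z)\<^sup>2 \<and> (g z)\<^sup>2 \<le> 4 * M\<^sup>2"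
        have "(min \<sigma> (2 * v z))\<^sup>2 \<le> (2 * v z)\<^sup>2"
          using s0 v0[of z] by (intro power_mono) auto
        then have "4 * (min \<sigma> (2 * v z))\<^sup>2 * (g z)\<^sup>2 \<le> 4 * (2 * v z)\<^sup>2 * (g z)\<^sup>2"
          by (intro mult_right_mono) auto
        also have "4 * (2 * v z)\<^sup>2 * (g z)\<^sup>2 = 16 * (v z)\<^sup>2 * (g z)\<^sup>2"
          by (simp add: power_mult_distrib)
        finally show "(\<xi> z)\<^sup>2 \<le> 16 * (v z)\<^sup>2 * (g z)\<^sup>2 \<and> (g z)\<^sup>2 \<le> 4 * M\<^sup>2"
          using h by linarith
      qed
      show ?thesis
      proof (cases "N = 0")
        case True
        have "AE z in \<rho>. (g z)\<^sup>2 = 0"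
          using integral_nonneg_eq_0_iff_AE[OF intg] Ig True by simp
        then have "AE z in \<rho>. (\<xi> z)\<^sup>2 = 0"
          using pt2 by eventually_elim simp
        then have "(\<integral> z. (\<xi> z)\<^sup>2 \<partial>\<rho>) = 0" by (rule integral_eq_zero_AE)
        then show ?thesis unfolding N_def[symmetric] xi_eq using rhs0 rhs1 by linarith
      next
        case Nne: False
        then have Np: "N > 0" using N0 by simp
        define T where "T = N powr (- 2 / (1 + \<epsilon>))"
        have Tp: "T > 0" unfolding T_def using Np by simp
        let ?p = "2 * (\<epsilon> - 1) / (\<epsilon> + 1)"
        have bnd: "AE z in \<rho>. (\<xi> z)\<^sup>2 \<le> 16 * (T\<^sup>2 * (g z)\<^sup>2 + 4 * M\<^sup>2 * T powr (1 - \<epsilon>) * D z)"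
          using pt2
        proof (rule AE_mp, intro AE_I2 impI)
          fix z :: "(real^'d) \<times> real" assume h: "(\<xi> z)\<^sup>2 \<le> 16 * (v z)\<^sup>2 * (g z)\<^sup>2 \<and> (g z)\<^sup>2 \<le> 4 * M\<^sup>2"
          have e1: "\<epsilon> > 1" using False by simp
          have q: "(v z)\<^sup>2 * (g z)\<^sup>2 \<le> T\<^sup>2 * (g z)\<^sup>2 + 4 * M\<^sup>2 * T powr (1 - \<epsilon>) * v z powr (1 + \<epsilon>)"
            using ptB[OF e1 Tp v0[of z]] h by blast
          have "4 * M\<^sup>2 * T powr (1 - \<epsilon>) * v z powr (1 + \<epsilon>) \<le> 4 * M\<^sup>2 * T powr (1 - \<epsilon>) * D z"
            using vD[of z] by (intro mult_left_mono) auto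
          then have r: "(v z)\<^sup>2 * (g z)\<^sup>2 \<le> T\<^sup>2 * (g z)\<^sup>2 + 4 * M\<^sup>2 * T powr (1 - \<epsilon>) * D z"
            using q by linarith
          have "(\<xi> z)\<^sup>2 \<le> 16 * ((v z)\<^sup>2 * (g z)\<^sup>2)" using conjunct1[OF h] by (simp add: mult.assoc)
          also have "\<dots> \<le> 16 * (T\<^sup>2 * (g z)\<^sup>2 + 4 * M\<^sup>2 * T powr (1 - \<epsilon>) * D z)"
            using r by (rule mult_left_mono) simp
          finally show "(\<xi> z)\<^sup>2 \<le> 16 * (T\<^sup>2 * (g z)\<^sup>2 + 4 * M\<^sup>2 * T powr (1 - \<epsilon>) * D z)" .
        qed
        have int2: "integrable \<rho> (\<lambda>z. 16 * (T\<^sup>2 * (g z)\<^sup>2 + 4 * M\<^sup>2 * T powr (1 - \<epsilon>) * D z))"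
          using intD intg by simp
        have int1: "integrable \<rho> (\<lambda>z. (\<xi> z)\<^sup>2)"
          by (rule Bochner_Integration.integrable_bound[OF int2 m\<xi> AE_le_norm[OF bnd]]) simp
        have "(\<integral> z. (\<xi> z)\<^sup>2 \<partial>\<rho>) \<le> (\<integral> z. 16 * (T\<^sup>2 * (g z)\<^sup>2 + 4 * M\<^sup>2 * T powr (1 - \<epsilon>) * D z) \<partial>\<rho>)"
          by (rule integral_mono_AE[OF int1 int2 bnd])
        also have "\<dots> = 16 * (T\<^sup>2 * N\<^sup>2 + 4 * M\<^sup>2 * T powr (1 - \<epsilon>) * ED)"
          using intD intg Ig unfolding ED_def by simp
        also have "T\<^sup>2 * N\<^sup>2 = N powr ?p"
        proof -
          have "T\<^sup>2 = T powr 2" using Tp by simp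
          also have "\<dots> = N powr (- 2 / (1 + \<epsilon>) * 2)" unfolding T_def by (rule powr_powr)
          finally have "T\<^sup>2 = N powr (- 2 / (1 + \<epsilon>) * 2)" .
          moreover have "N\<^sup>2 = N powr 2" using Np by simp
          ultimately have "T\<^sup>2 * N\<^sup>2 = N powr (- 2 / (1 + \<epsilon>) * 2 + 2)" by (metis powr_add)
          also have "- 2 / (1 + \<epsilon>) * 2 + 2 = ?p" using eps_pos by (simp add: field_simps)
          finally show ?thesis .
        qed
        also have "T powr (1 - \<epsilon>) = N powr ?p"
        proof -
          have "T powr (1 - \<epsilon>) = N powr (- 2 / (1 + \<epsilon>) * (1 - \<epsilon>))" unfolding T_def by (simp add: powr_powr)
          also have "- 2 / (1 + \<epsilon>) * (1 - \<epsilon>) = ?p" using eps_pos by (simp add: field_simps)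
          finally show ?thesis .
        qed
        also have "16 * (N powr ?p + 4 * M\<^sup>2 * N powr ?p * ED) = c1 * N powr ?p"
          unfolding c1_def by (simp add: algebra_simps)
        finally show ?thesis unfolding N_def[symmetric] xi_eq pp using rhs1 by linarith
      qed
    qed
  qed
qed

end
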